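(* Let $J\in\mathbb{R}\cup\{\infty\}$ and $K\in\mathbb{R}$ with $J>K$. If $(x_n)_{n\in\mathbb{Z}}\in\mathcal{X}^!_{J,K}$, then there exists at most one sequence $(u_n)_{n\in\mathbb{Z}}\in\mathbb{R}^{\mathbb{Z}}$ such that $\left(F^{(J,K)}_{udK}\right)^{(2)}(x_n,u_{n-1})=u_n$ for all $n\in\mathbb{Z}$.
   Context: $F^{(J,K)}_{udK}(x,u):=\big(u-\max\{x+u-J,0\}+\max\{x+u-K,0\},\;x-\max\{x+u-K,0\}+\max\{x+u-J,0\}\big)$ for $x,u\in\mathbb{R}$, with $\max\{x+u-\infty,0\}:=0$; the superscript $(2)$ denotes the second coordinate. For $J=\infty>K$, $\mathcal{X}^!_{J,K}:=\{(x_n)_{n\in\mathbb{Z}}\in\mathbb{R}^{\mathbb{Z}}:\limsup_{n\to-\infty}\mathbf{1}_{\{x_n+x_{n+1}\le K\}}=1\}$; for $\infty>J>K$, $\mathcal{X}^!_{J,K}:=\{(x_n)_{n\in\mathbb{Z}}:\limsup_{n\to-\infty}\mathbf{1}_{\{x_n+x_{n+1}\le K\}\cup\{x_n+x_{n+1}\ge2J-K\}}=1\}$. *)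

theory Defs
  imports "HOL-Analysis.Analysis" "HOL-Library.Extended_Real"
begin

definition maxJ :: "ereal \<Rightarrow> real \<Rightarrow> real" where
  "maxJ J s = (case J of ereal j \<Rightarrow> max (s - j) 0 | _ \<Rightarrow> 0)"

definition F_udK :: "ereal \<Rightarrow> real \<Rightarrow> real \<Rightarrow> real \<Rightarrow> real \<times> real" where
  "F_udK J K x u =
     (u - maxJ J (x + u) + max (x + u - K) 0,
      x - max (x + u - K) 0 + maxJ J (x + u))"

definition Xbang :: "ereal \<Rightarrow> real \<Rightarrow> (int \<Rightarrow> real) set" where
  "Xbang J K = {x. case J of
      PInfty \<Rightarrow> Limsup at_bot (\<lambda>n::int. ereal (indicator {m. x m + x (m+1) \<le> K} n)) = 1
    | ereal j \<Rightarrow> Limsup at_bot (\<lambda>n::int. ereal (indicator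
         ({m. x m + x (m+1) \<le> K} \<union> {m. x m + x (m+1) \<ge> 2*j - K}) n)) = 1
    | MInfty \<Rightarrow> False}"

end

theory Submission
  imports Defs
begin

lemma freq_of_limsup:
  assumes "Limsup at_bot (\<lambda>n::int. ereal (indicator S n)) = 1"
  shows "\<exists>n\<le>N. n \<in> S"
proof (rule ccontr)
  assume "\<not> (\<exists>n\<le>N. n \<in> S)"
  hence "eventually (\<lambda>n. ereal (indicator S n) = 0) (at_bot::int filter)"
    unfolding eventually_at_bot_linorder by (auto simp: indicator_def)
  hence "Limsup at_bot (\<lambda>n::int. ereal (indicator S n)) = Limsup at_bot (\<lambda>n::int. 0)"
    by (rule Limsup_eq)
  also have "\<dots> = 0" by (simp add: Limsup_const)
  finally show False using assms by simp
qed

lemma snd_le: "J > ereal K \<Longrightarrow> snd (F_udK J K x u) \<le> x"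
  by (cases J) (auto simp: F_udK_def maxJ_def)

lemma snd_low: "snd (F_udK J K x u) = x" if "x + u \<le> K" "J > ereal K"
  using that by (cases J) (auto simp: F_udK_def maxJ_def)

lemma snd_ge: "ereal j > ereal K \<Longrightarrow> snd (F_udK (ereal j) K x u) \<ge> x + K - j"
  by (auto simp: F_udK_def maxJ_def)

lemma snd_high: "ereal j > ereal K \<Longrightarrow> x + u \<ge> j \<Longrightarrow> snd (F_udK (ereal j) K x u) = x + K - j"
  by (auto simp: F_udK_def maxJ_def)

theorem lemma3p5:
  fixes J :: ereal and K :: real and x :: "int \<Rightarrow> real"
  assumes "J > ereal K"
    and "x \<in> Xbang J K"
  shows "\<forall>u v :: int \<Rightarrow> real.
           (\<forall>n. snd (F_udK J K (x n) (u (n - 1))) = u n) \<and>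
           (\<forall>n. snd (F_udK J K (x n) (v (n - 1))) = v n) \<longrightarrow> u = v"
proof (intro allI impI)
  fix u v :: "int \<Rightarrow> real"
  assume H: "(\<forall>n. snd (F_udK J K (x n) (u (n - 1))) = u n) \<and>
           (\<forall>n. snd (F_udK J K (x n) (v (n - 1))) = v n)"
  have fwd: "u m = v m" if "u (n+1) = v (n+1)" "m \<ge> n+1" for n m
    using that(2)
  proof (induction m rule: int_ge_induct)
    case base then show ?case using that(1) by simp
  next
    case (step i)
    have "u (i+1) = snd (F_udK J K (x (i+1)) (u i))" using H by (metis add_diff_cancel_right')
    also have "\<dots> = snd (F_udK J K (x (i+1)) (v i))" using step by simp
    also have "\<dots> = v (i+1)" using H by (metis add_diff_cancel_right')
    finally show ?case .
  qed
  have key: "\<exists>n\<le>N. u (n+1) = v (n+1)" for N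
  proof (cases J)
    case PInf
    then have "Limsup at_bot (\<lambda>n::int. ereal (indicator {m. x m + x (m+1) \<le> K} n)) = 1"
      using assms(2) by (simp add: Xbang_def)
    then obtain n where n: "n \<le> N" "x n + x (n+1) \<le> K" using freq_of_limsup by blast
    have "w (n+1) = x (n+1)" if "\<forall>n. snd (F_udK J K (x n) (w (n - 1))) = w n" for w
    proof -
      have "w n \<le> x n" using that snd_le[OF assms(1)] by metis
      hence "snd (F_udK J K (x (n+1)) (w n)) = x (n+1)" using n by (intro snd_low assms(1)) simp
      thus ?thesis using that by (metis add_diff_cancel_right')
    qed
    thus ?thesis using H n by metis
  next
    case (real j)
    then have "Limsup at_bot (\<lambda>n::int. ereal (indicator
         ({m. x m + x (m+1) \<le> K} \<union> {m. x m + x (m+1) \<ge> 2*j - K}) n)) = 1"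
      using assms(2) by (simp add: Xbang_def)
    then obtain n where n: "n \<le> N" "x n + x (n+1) \<le> K \<or> x n + x (n+1) \<ge> 2*j - K"
      using freq_of_limsup by blast
    have jK: "ereal j > ereal K" using assms(1) real by simp
    show ?thesis
    proof (cases "x n + x (n+1) \<le> K")
      case True
      have "w (n+1) = x (n+1)" if "\<forall>n. snd (F_udK J K (x n) (w (n - 1))) = w n" for w
      proof -
        have "w n \<le> x n" using that snd_le[OF assms(1)] by metis
        hence "snd (F_udK J K (x (n+1)) (w n)) = x (n+1)" using True by (intro snd_low assms(1)) simp
        thus ?thesis using that by (metis add_diff_cancel_right')
      qed
      thus ?thesis using H n by metis
    next
      case False
      have "w (n+1) = x (n+1) + K - j" if "\<forall>n. snd (F_udK J K (x n) (w (n - 1))) = w n" for w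
      proof -
        have "w n \<ge> x n + K - j" using that snd_ge[OF jK] real by metis
        hence "snd (F_udK J K (x (n+1)) (w n)) = x (n+1) + K - j"
          using False n unfolding real by (intro snd_high jK) simp
        thus ?thesis using that by (metis add_diff_cancel_right')
      qed
      thus ?thesis using H n by metis
    qed
  next
    case MInf
    then show ?thesis using assms(1) by simp
  qed
  show "u = v"
  proof
    fix m
    obtain n where "n \<le> m - 1" "u (n+1) = v (n+1)" using key by blast
    thus "u m = v m" using fwd[of n m] by simp
  qed
qed

end
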